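(* Let $(X,\mathbb{A},d)$ be a complete $C^*$-algebra valued metric space, where $\mathbb{A}$ is a unital $C^*$-algebra. Let $T,S:X\to X$ be mappings such that $$d(T^n x,S^n y)\preceq (q(x,y)^* )^n\,\delta(x,y)\,q(x,y)^n\quad\text{for all }x,y\in X,\ n\in\mathbb{N},$$ where $q:X\times X\to\mathbb{A}$ satisfies $0\le\|q(x,y)\|<1$ for all $x,y\in X$ and $\delta:X\times X\to\mathbb{A}_+$ is a mapping. Then $T$ and $S$ are both orbitally continuous on $X$ if and only if $T$ and $S$ have a unique common fixed point in $X$.
   Context: $\mathbb{A}$ denotes a unital $C^*$-algebra with unit $I$ and zero $\theta$. An element $a\in\mathbb{A}$ is positive, written $a\succeq\theta$, if $a^*=a$ and its spectrum is contained in $[0,\infty)$; $\mathbb{A}_+$ is the set of positive elements, and $a\succeq b$ means $a-b\succeq\theta$. A $C^*$-algebra valued metric space $(X,\mathbb{A},d)$ is a nonempty set $X$ with $d:X\times X\to\mathbb{A}$ such that for all $x,y,z\in X$: $d(x,y)\succeq\theta$, with $d(x,y)=\theta$ iff $x=y$; $d(x,y)=d(y,x)$; $d(x,y)\preceq d(x,z)+d(z,y)$. A sequence $\{x_n\}$ converges to $x$ if $\|d(x_n,x)\|\to0$, and is Cauchy if $\|d(x_n,x_m)\|\to0$ as $n,m\to\infty$; the space is complete if every Cauchy sequence converges to a point of $X$. A self-map $T$ of $X$ is orbitally continuous at $u\in X$ if for every $x\in X$ and every increasing sequence of positive integers $\{n_i\}$, $\|d(T^{n_i}x,u)\|\to0$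 implies $\|d(T^{n_i+1}x,Tu)\|\to0$ as $i\to\infty$; $T$ is orbitally continuous on $X$ if it is orbitally continuous at every $u\in X$. *)

theory Defs
  imports "HOL-Analysis.Analysis"
begin

text \<open>A unital C*-algebra is modelled as a real Banach algebra with unit
(type class real_normed_algebra_1 + banach) together with an element J
playing the role of i*I (central, J*J = -1, complex-homogeneous norm), which
turns it into a complex unital Banach algebra, and an involution star.\<close>

definition cmul :: "'a::real_normed_algebra_1 \<Rightarrow> complex \<Rightarrow> 'a \<Rightarrow> 'a" where
  "cmul J c x = Re c *\<^sub>R x + Im c *\<^sub>R (J * x)"

definition unital_cstar_algebra ::
  "'a::{real_normed_algebra_1,banach} \<Rightarrow> ('a \<Rightarrow> 'a) \<Rightarrow> bool" where
  "unital_cstar_algebra J star \<longleftrightarrow>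
     (\<forall>x. J * x = x * J) \<and> J * J = - 1 \<and>
     (\<forall>c x. norm (cmul J c x) = cmod c * norm x) \<and>
     (\<forall>x. star (star x) = x) \<and>
     (\<forall>x y. star (x + y) = star x + star y) \<and>
     (\<forall>c x. star (cmul J c x) = cmul J (cnj c) (star x)) \<and>
     (\<forall>x y. star (x * y) = star y * star x) \<and>
     (\<forall>x. norm (star x * x) = (norm x)\<^sup>2)"

definition alg_invertible :: "'a::ring_1 \<Rightarrow> bool" where
  "alg_invertible a \<longleftrightarrow> (\<exists>b. a * b = 1 \<and> b * a = 1)"

definition cspectrum :: "'a::real_normed_algebra_1 \<Rightarrow> 'a \<Rightarrow> complex set" where
  "cspectrum J a = {c. \<not> alg_invertible (a - cmul J c 1)}"

definition cpositive :: "'a::real_normed_algebra_1 \<Rightarrow> ('a \<Rightarrow> 'a) \<Rightarrow> 'a \<Rightarrow> bool" where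
  "cpositive J star a \<longleftrightarrow> star a = a \<and>
     cspectrum J a \<subseteq> {c. Im c = 0 \<and> Re c \<ge> 0}"

definition cle :: "'a::real_normed_algebra_1 \<Rightarrow> ('a \<Rightarrow> 'a) \<Rightarrow> 'a \<Rightarrow> 'a \<Rightarrow> bool" where
  "cle J star a b \<longleftrightarrow> cpositive J star (b - a)"

definition cstar_metric ::
  "'a::real_normed_algebra_1 \<Rightarrow> ('a \<Rightarrow> 'a) \<Rightarrow> 'x set \<Rightarrow> ('x \<Rightarrow> 'x \<Rightarrow> 'a) \<Rightarrow> bool" where
  "cstar_metric J star X d \<longleftrightarrow> X \<noteq> {} \<and>
     (\<forall>x\<in>X. \<forall>y\<in>X. cpositive J star (d x y) \<and> (d x y = 0 \<longleftrightarrow> x = y) \<and> d x y = d y x) \<and>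
     (\<forall>x\<in>X. \<forall>y\<in>X. \<forall>z\<in>X. cle J star (d x y) (d x z + d z y))"

definition cstar_complete :: "'x set \<Rightarrow> ('x \<Rightarrow> 'x \<Rightarrow> 'a::real_normed_vector) \<Rightarrow> bool" where
  "cstar_complete X d \<longleftrightarrow>
     (\<forall>s. (\<forall>n. s n \<in> X) \<longrightarrow>
        (\<forall>e>0. \<exists>N. \<forall>n\<ge>N. \<forall>m\<ge>N. norm (d (s n) (s m)) < e) \<longrightarrow>
        (\<exists>x\<in>X. (\<lambda>n. norm (d (s n) x)) \<longlonglongrightarrow> 0))"

definition orbitally_continuous_at ::
  "'x set \<Rightarrow> ('x \<Rightarrow> 'x \<Rightarrow> 'a::real_normed_vector) \<Rightarrow> ('x \<Rightarrow> 'x) \<Rightarrow> 'x \<Rightarrow> bool" where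
  "orbitally_continuous_at X d T u \<longleftrightarrow>
     (\<forall>x\<in>X. \<forall>ns::nat \<Rightarrow> nat. strict_mono ns \<and> (\<forall>i. ns i > 0) \<longrightarrow>
        (\<lambda>i. norm (d ((T ^^ ns i) x) u)) \<longlonglongrightarrow> 0 \<longrightarrow>
        (\<lambda>i. norm (d ((T ^^ (ns i + 1)) x) (T u))) \<longlonglongrightarrow> 0)"

definition orbitally_continuous ::
  "'x set \<Rightarrow> ('x \<Rightarrow> 'x \<Rightarrow> 'a::real_normed_vector) \<Rightarrow> ('x \<Rightarrow> 'x) \<Rightarrow> bool" where
  "orbitally_continuous X d T \<longleftrightarrow> (\<forall>u\<in>X. orbitally_continuous_at X d T u)"

end

theory Submission
  imports Defs "HOL-Analysis.Analysis"
begin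



definition ainv :: "'a::ring_1 \<Rightarrow> 'a" where
  "ainv a = (THE b. a * b = 1 \<and> b * a = 1)"

lemma ainv_unique:
  fixes a :: "'a::ring_1"
  assumes "a * b = 1" "b * a = 1" "a * c = 1" "c * a = 1"
  shows "b = c"
proof -
  have "b = b * (a * c)" using assms by simp
  also have "\<dots> = (b * a) * c" by (simp add: mult.assoc)
  finally show ?thesis using assms by simp
qed

lemma ainv_props:
  fixes a :: "'a::ring_1"
  assumes "alg_invertible a"
  shows "a * ainv a = 1" "ainv a * a = 1"
proof -
  obtain b where b: "a * b = 1" "b * a = 1" using assms unfolding alg_invertible_def by blast
  have "ainv a = b" unfolding ainv_def
    by (rule the_equality) (use b ainv_unique in blast)+
  then show "a * ainv a = 1" "ainv a * a = 1" using b by auto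
qed

lemma ainv_eqI:
  fixes a :: "'a::ring_1"
  assumes "a * b = 1" "b * a = 1"
  shows "alg_invertible a" "ainv a = b"
proof -
  show "alg_invertible a" using assms unfolding alg_invertible_def by blast
  then show "ainv a = b" using ainv_props ainv_unique assms by metis
qed

lemma inv_mult:
  fixes a b :: "'a::ring_1"
  assumes "alg_invertible a" "alg_invertible b"
  shows "alg_invertible (a * b)"
proof -
  have "(a * b) * (ainv b * ainv a) = a * (b * ainv b) * ainv a" by (simp add: mult.assoc)
  also have "\<dots> = 1" by (simp add: ainv_props assms)
  finally have 1: "(a * b) * (ainv b * ainv a) = 1" .
  have "(ainv b * ainv a) * (a * b) = ainv b * (ainv a * a) * b" by (simp add: mult.assoc)
  also have "\<dots> = 1" by (simp add: ainv_props assms)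
  finally show ?thesis using 1 unfolding alg_invertible_def by blast
qed

lemma inv_uminus:
  fixes a :: "'a::ring_1"
  shows "alg_invertible (- a) \<longleftrightarrow> alg_invertible a"
  unfolding alg_invertible_def by (metis minus_mult_minus minus_minus)

lemma inv_one: "alg_invertible (1::'a::ring_1)"
  unfolding alg_invertible_def by auto

lemma ainv_one: "ainv (1::'a::ring_1) = 1"
  using ainv_eqI[of 1 1] by simp

lemma ainv_commute:
  fixes a x :: "'a::ring_1"
  assumes "alg_invertible a" "x * a = a * x"
  shows "x * ainv a = ainv a * x"
proof -
  have "x * ainv a = (ainv a * a) * x * ainv a" using ainv_props[OF assms(1)] by simp
  also have "\<dots> = ainv a * (x * a) * ainv a" using assms(2) by (simp add: mult.assoc)
  also have "\<dots> = ainv a * x * (a * ainv a)" by (simp add: mult.assoc)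
  finally show ?thesis using ainv_props[OF assms(1)] by simp
qed

section \<open>Neumann series\<close>

lemma neumann:
  fixes x :: "'a::{real_normed_algebra_1,banach}"
  assumes "norm x < 1"
  shows "alg_invertible (1 - x)" "ainv (1 - x) = (\<Sum>n. x ^ n)"
    "norm (ainv (1 - x)) \<le> 1 / (1 - norm x)"
    "norm (ainv (1 - x) - 1 - x) \<le> (norm x)\<^sup>2 / (1 - norm x)"
proof -
  have sm: "summable (\<lambda>n. x ^ n)" by (rule complete_algebra_summable_geometric[OF assms])
  define s where "s = (\<Sum>n. x ^ n)"
  have sums: "(\<lambda>n. x ^ n) sums s" using sm s_def by (simp add: summable_sums)
  have s1: "(\<lambda>n. x * x ^ n) sums (x * s)" by (rule sums_mult[OF sums])
  have s2: "(\<lambda>n. x ^ n * x) sums (s * x)" by (rule sums_mult2[OF sums])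
  have "(\<lambda>n. x ^ Suc n) sums (s - x ^ 0)"
    using sums_split_initial_segment[OF sums, of 1] by simp
  then have a: "x * s = s - 1" using s1 sums_unique2 by (simp add: power_commutes)
  have b: "s * x = s - 1"
  proof -
    have "(\<lambda>n. x ^ n * x) sums (s - 1)"
      using \<open>(\<lambda>n. x ^ Suc n) sums (s - x ^ 0)\<close> by (simp add: power_commutes)
    then show ?thesis using s2 sums_unique2 by blast
  qed
  have "(1 - x) * s = 1" using a by (simp add: algebra_simps)
  moreover have "s * (1 - x) = 1" using b by (simp add: algebra_simps)
  ultimately show inv: "alg_invertible (1 - x)" and eq: "ainv (1 - x) = (\<Sum>n. x ^ n)"
    using ainv_eqI s_def by auto
  have nsum: "summable (\<lambda>n. norm x ^ n)" using assms by (simp add: summable_geometric)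
  have "norm s \<le> (\<Sum>n. norm x ^ n)"
    unfolding s_def by (rule norm_suminf_le[OF _ nsum]) (simp add: norm_power_ineq)
  also have "\<dots> = 1 / (1 - norm x)" using suminf_geometric[of "norm x"] assms by simp
  finally show "norm (ainv (1 - x)) \<le> 1 / (1 - norm x)" using eq s_def by simp
  have a2: "x * (x * s) = x * s - x" using a by (simp add: right_diff_distrib)
  have "ainv (1 - x) - 1 - x = x * x * s"
    using eq s_def a a2 by (simp add: mult.assoc)
  also have "norm \<dots> \<le> norm x * norm x * norm s"
    by (metis norm_mult_ineq mult_right_mono norm_ge_zero order_trans)
  also have "\<dots> \<le> norm x * norm x * (1 / (1 - norm x))"
    by (intro mult_left_mono \<open>norm s \<le> _\<close>[unfolded \<open>(\<Sum>n. norm x ^ n) = _\<close>]) auto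
  finally show "norm (ainv (1 - x) - 1 - x) \<le> (norm x)\<^sup>2 / (1 - norm x)"
    by (simp add: power2_eq_square)
qed




definition emb :: "'a::real_normed_algebra_1 \<Rightarrow> complex \<Rightarrow> 'a" where
  "emb J c = Re c *\<^sub>R 1 + Im c *\<^sub>R J"

locale cstar =
  fixes J :: "'a::{real_normed_algebra_1,banach}" and star :: "'a \<Rightarrow> 'a"
  assumes ua: "unital_cstar_algebra J star"
begin

lemma Jc: "J * x = x * J" and JJ: "J * J = - 1"
  and nrm: "norm (cmul J c x) = cmod c * norm x"
  and ss: "star (star x) = x" and sadd: "star (x + y) = star x + star y"
  and scm: "star (cmul J c x) = cmul J (cnj c) (star x)"
  and smul: "star (x * y) = star y * star x"
  and cst: "norm (star x * x) = (norm x)\<^sup>2"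
  using ua unfolding unital_cstar_algebra_def by blast+

lemma cmul_emb: "cmul J c x = emb J c * x"
  unfolding cmul_def emb_def by (simp add: distrib_right)

lemma emb_central: "emb J c * x = x * emb J c"
  unfolding emb_def by (simp add: distrib_right distrib_left Jc)

lemma emb_add: "emb J (c + d) = emb J c + emb J d"
  unfolding emb_def by (simp add: scaleR_add_left)

lemma emb_minus: "emb J (- c) = - emb J c"
  unfolding emb_def by simp

lemma emb_diff: "emb J (c - d) = emb J c - emb J d"
  unfolding emb_def by (simp add: scaleR_diff_left)

lemma emb_one[simp]: "emb J 1 = 1" and emb_zero[simp]: "emb J 0 = 0"
  unfolding emb_def by auto

lemma emb_of_real: "emb J (complex_of_real r) = r *\<^sub>R 1"
  unfolding emb_def by simp

lemma emb_i: "emb J \<i> = J"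
  unfolding emb_def by simp

lemma emb_mult: "emb J (c * d) = emb J c * emb J d"
proof -
  have "emb J c * emb J d = (Re c * Re d) *\<^sub>R 1 + (Re c * Im d) *\<^sub>R J + ((Im c * Re d) *\<^sub>R J
      + (Im c * Im d) *\<^sub>R (J * J))"
    unfolding emb_def by (simp add: distrib_left distrib_right add.assoc scaleR_add_right mult.commute)
  also have "\<dots> = (Re c * Re d - Im c * Im d) *\<^sub>R 1 + (Re c * Im d + Im c * Re d) *\<^sub>R J"
    unfolding JJ by (simp add: scaleR_diff_left scaleR_add_left)
  also have "\<dots> = emb J (c * d)"
    unfolding emb_def by simp
  finally show ?thesis by simp
qed

lemma emb_power: "emb J (c ^ n) = emb J c ^ n"
  by (induction n) (simp_all add: emb_mult)

lemma norm_emb_mult: "norm (emb J c * x) = cmod c * norm x"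
  using nrm[of c x] by (simp add: cmul_emb)

lemma norm_emb: "norm (emb J c) = cmod c"
  using norm_emb_mult[of c 1] by simp

lemma emb_inv: "c \<noteq> 0 \<Longrightarrow> emb J c * emb J (inverse c) = 1"
  by (simp flip: emb_mult)

lemma star_emb_mult: "star (emb J c * x) = emb J (cnj c) * star x"
  using scm[of c x] by (simp add: cmul_emb)

lemma star_one[simp]: "star 1 = 1"
proof -
  have "star (star 1 * 1) = star 1 * star (star 1)" by (rule smul)
  then show ?thesis using ss[of 1] by simp
qed

lemma star_zero[simp]: "star 0 = 0"
  using sadd[of 0 0] by simp

lemma star_uminus: "star (- x) = - star x"
proof -
  have "star x + star (- x) = 0" using sadd[of x "- x"] by simp
  then show ?thesis by (metis add.commute add_eq_0_iff2)
qed

lemma star_diff: "star (x - y) = star x - star y"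
  using sadd[of x "- y"] star_uminus by simp

lemma star_emb: "star (emb J c) = emb J (cnj c)"
  using star_emb_mult[of c 1] by simp

lemma star_scaleR: "star (r *\<^sub>R x) = r *\<^sub>R star x"
  using star_emb_mult[of "complex_of_real r" x] by (simp add: emb_of_real)

lemma star_power: "star (x ^ n) = star x ^ n"
  by (induction n) (simp_all add: smul power_commutes)

lemma norm_star: "norm (star x) = norm x"
proof -
  have le: "norm y \<le> norm (star y)" for y
  proof (cases "y = 0")
    case False
    have "(norm y)\<^sup>2 \<le> norm (star y) * norm y" using cst[of y] norm_mult_ineq[of "star y" y] by simp
    then show ?thesis using False by (simp add: power2_eq_square)
  qed simp
  show ?thesis using le[of x] le[of "star x"] ss by simp
qed

definition spec :: "'a \<Rightarrow> complex set" where
  "spec a = {c. \<not> alg_invertible (a - emb J c)}"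

lemma cspectrum_eq: "cspectrum J a = spec a"
  unfolding cspectrum_def spec_def by (simp add: cmul_emb)

lemma spec_bound:
  assumes "c \<in> spec a" shows "cmod c \<le> norm a"
proof (rule ccontr)
  assume "\<not> cmod c \<le> norm a"
  then have lt: "norm a < cmod c" by simp
  then have c0: "c \<noteq> 0" by auto
  let ?x = "emb J (inverse c) * a"
  have "norm ?x = norm a / cmod c" unfolding norm_emb_mult by (simp add: norm_inverse divide_inverse mult.commute)
  also have "\<dots> < 1" using lt c0 by simp
  finally have "alg_invertible (1 - ?x)" by (rule neumann(1))
  moreover have "alg_invertible (- emb J c)"
  proof -
    have e1: "emb J c * emb J (inverse c) = 1" using emb_inv[OF c0] .
    have e2: "emb J (inverse c) * emb J c = 1" using e1 emb_central by metis
    have "(- emb J c) * (- emb J (inverse c)) = 1" using e1 by simp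
    moreover have "(- emb J (inverse c)) * (- emb J c) = 1" using e2 by simp
    ultimately show ?thesis by (rule ainv_eqI(1))
  qed
  ultimately have "alg_invertible ((- emb J c) * (1 - ?x))" by (rule inv_mult[rotated])
  moreover have "(- emb J c) * (1 - ?x) = a - emb J c"
  proof -
    have "(- emb J c) * (1 - ?x) = - emb J c + (emb J c * emb J (inverse c)) * a"
      by (simp add: right_diff_distrib mult.assoc)
    also have "\<dots> = a - emb J c" using emb_inv[OF c0] by simp
    finally show ?thesis .
  qed
  ultimately show False using assms unfolding spec_def by simp
qed

end



lemma inv_near:
  fixes a h :: "'a::{real_normed_algebra_1,banach}"
  assumes inv: "alg_invertible a" and sm: "norm (ainv a) * norm h < 1"
  shows "alg_invertible (a + h)"
    "norm (ainv (a + h) - ainv a + ainv a * h * ainv a)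
       \<le> norm (ainv a) * (norm (ainv a) * norm h)\<^sup>2 / (1 - norm (ainv a) * norm h)"
proof -
  define b where "b = ainv a"
  define x where "x = - (b * h)"
  have ab: "a * b = 1" "b * a = 1" using ainv_props[OF inv] b_def by auto
  have nx: "norm x \<le> norm b * norm h" unfolding x_def by (simp add: norm_mult_ineq)
  then have nx1: "norm x < 1" using sm b_def by simp
  note N = neumann[OF nx1]
  define u where "u = ainv (1 - x)"
  have u: "(1 - x) * u = 1" "u * (1 - x) = 1" using ainv_props[OF N(1)] u_def by auto
  have ah: "a + h = a * (1 - x)" unfolding x_def using ab by (simp add: distrib_left mult.assoc[symmetric])
  have e1: "(a + h) * (u * b) = 1"
  proof -
    have "(a + h) * (u * b) = a * ((1 - x) * u) * b" unfolding ah by (simp add: mult.assoc)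
    also have "\<dots> = 1" using u ab by simp
    finally show ?thesis .
  qed
  have e2: "(u * b) * (a + h) = 1"
  proof -
    have "(u * b) * (a + h) = u * (b * a) * (1 - x)" unfolding ah by (simp add: mult.assoc)
    also have "\<dots> = 1" using u ab by simp
    finally show ?thesis .
  qed
  show "alg_invertible (a + h)" using ainv_eqI(1)[OF e1 e2] .
  have eq: "ainv (a + h) = u * b" using ainv_eqI(2)[OF e1 e2] .
  have "ainv (a + h) - ainv a + ainv a * h * ainv a = (u - 1 - x) * b"
    unfolding eq b_def[symmetric] x_def by (simp add: algebra_simps)
  also have "norm \<dots> \<le> norm (u - 1 - x) * norm b" by (rule norm_mult_ineq)
  also have "\<dots> \<le> (norm x)\<^sup>2 / (1 - norm x) * norm b"
    using N(4) u_def by (intro mult_right_mono) auto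
  also have "\<dots> \<le> (norm b * norm h)\<^sup>2 / (1 - norm b * norm h) * norm b"
  proof (intro mult_right_mono frac_le)
    show "(norm x)\<^sup>2 \<le> (norm b * norm h)\<^sup>2" using nx by (intro power_mono) auto
    show "0 < 1 - norm b * norm h" using sm b_def by simp
    show "1 - norm b * norm h \<le> 1 - norm x" using nx by simp
  qed auto
  finally show "norm (ainv (a + h) - ainv a + ainv a * h * ainv a)
       \<le> norm (ainv a) * (norm (ainv a) * norm h)\<^sup>2 / (1 - norm (ainv a) * norm h)"
    using b_def by (simp add: mult.commute)
qed

lemma ainv_has_derivative:
  fixes a :: "'a::{real_normed_algebra_1,banach}"
  assumes inv: "alg_invertible a"
  shows "(ainv has_derivative (\<lambda>h. - (ainv a * h * ainv a))) (at a within S)"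
  unfolding has_derivative_iff_norm
proof
  show "bounded_linear (\<lambda>h. - (ainv a * h * ainv a))"
    by (intro bounded_linear_minus bounded_linear_mult_const bounded_linear_mult_right)
  define B where "B = norm (ainv a)"
  have B0: "B \<ge> 0" using B_def by simp
  show "((\<lambda>y. norm (ainv y - ainv a - - (ainv a * (y - a) * ainv a)) / norm (y - a)) \<longlongrightarrow> 0) (at a within S)"
  proof (rule tendsto_0_le[where K = "2 * B ^ 3"])
    show "((\<lambda>y. y - a) \<longlongrightarrow> 0) (at a within S)"
      by (intro tendsto_eq_intros) auto
    show "\<forall>\<^sub>F y in at a within S. norm (norm (ainv y - ainv a - - (ainv a * (y - a) * ainv a)) / norm (y - a))
        \<le> norm (y - a) * (2 * B ^ 3)"
      unfolding eventually_at
    proof (intro exI[of _ "1 / (2 * (B + 1))"] conjI ballI impI)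
      show "0 < 1 / (2 * (B + 1))" using B0 by simp
      fix y assume yS: "y \<in> S" and y: "y \<noteq> a \<and> dist y a < 1 / (2 * (B + 1))"
      define h where "h = y - a"
      have hpos: "norm h > 0" using y h_def by simp
      have "norm h < 1 / (2 * (B + 1))" using y h_def by (simp add: dist_norm)
      then have "norm h * (2 * (B + 1)) < 1" using B0 by (simp add: field_simps)
      moreover have "2 * (B * norm h) \<le> norm h * (2 * (B + 1))"
        using hpos by (simp add: algebra_simps)
      ultimately have Bh: "B * norm h \<le> 1/2" by linarith
      have sm: "norm (ainv a) * norm h < 1" using Bh B_def by simp
      have yy: "y = a + h" using h_def by simp
      have "norm (ainv y - ainv a - - (ainv a * (y - a) * ainv a))
          = norm (ainv (a + h) - ainv a + ainv a * h * ainv a)" using yy h_def by simp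
      also have "\<dots> \<le> B * (B * norm h)\<^sup>2 / (1 - B * norm h)"
        using inv_near(2)[OF inv sm] B_def by simp
      also have "\<dots> \<le> B * (B * norm h)\<^sup>2 / (1/2)"
        using Bh B0 by (intro divide_left_mono mult_nonneg_nonneg) auto
      also have "\<dots> = norm h * (norm h * (2 * B ^ 3))"
        by (simp add: power2_eq_square power3_eq_cube field_simps)
      finally have "norm (ainv y - ainv a - - (ainv a * (y - a) * ainv a)) / norm h \<le> norm h * (2 * B ^ 3)"
        using hpos by (simp add: divide_le_eq mult.commute)
      then show "norm (norm (ainv y - ainv a - - (ainv a * (y - a) * ainv a)) / norm (y - a))
        \<le> norm (y - a) * (2 * B ^ 3)" using h_def by simp
    qed
  qed
qed

lemma ainv_continuous_on: "continuous_on {a::'a::{real_normed_algebra_1,banach}. alg_invertible a} ainv"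
  using ainv_has_derivative has_derivative_continuous continuous_at_imp_continuous_on
  by (metis mem_Collect_eq)




context cstar begin

lemma star_J: "star J = - J"
  using star_emb[of \<i>] by (simp add: emb_i emb_minus)

lemma emb_iR: "emb J (\<i> * complex_of_real t) = t *\<^sub>R J"
  unfolding emb_def by simp

lemma sa_spec_real:
  assumes sa: "star h = h" and c: "c \<in> spec h"
  shows "Im c = 0"
proof (rule ccontr)
  assume nz: "Im c \<noteq> 0"
  have key: "(Re c)\<^sup>2 + (Im c + t)\<^sup>2 \<le> (norm h)\<^sup>2 + t\<^sup>2" for t :: real
  proof -
    define g where "g = h + t *\<^sub>R J"
    have "g - emb J (c + \<i> * complex_of_real t) = h - emb J c"
      unfolding g_def emb_add emb_iR by simp
    then have "c + \<i> * complex_of_real t \<in> spec g" using c unfolding spec_def by simp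
    then have b: "cmod (c + \<i> * complex_of_real t) \<le> norm g" by (rule spec_bound)
    have sg: "star g = h - t *\<^sub>R J" unfolding g_def sadd star_scaleR star_J sa by simp
    have "star g * g = (h - t *\<^sub>R J) * (h + t *\<^sub>R J)" using sg g_def by simp
    also have "\<dots> = h * h + t *\<^sub>R (h * J) - t *\<^sub>R (J * h) - (t * t) *\<^sub>R (J * J)"
      by (simp add: algebra_simps)
    also have "\<dots> = h * h + (t * t) *\<^sub>R 1" using JJ Jc[of h] by simp
    finally have "star g * g = h * h + (t * t) *\<^sub>R 1" .
    then have "(norm g)\<^sup>2 = norm (h * h + (t * t) *\<^sub>R 1)" using cst[of g] by simp
    also have "\<dots> \<le> norm (h * h) + norm ((t * t) *\<^sub>R (1::'a))" by (rule norm_triangle_ineq)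
    also have "\<dots> \<le> (norm h)\<^sup>2 + t\<^sup>2"
      using norm_mult_ineq[of h h] by (simp add: power2_eq_square)
    finally have "(norm g)\<^sup>2 \<le> (norm h)\<^sup>2 + t\<^sup>2" .
    moreover have "(cmod (c + \<i> * complex_of_real t))\<^sup>2 \<le> (norm g)\<^sup>2"
      using b by (intro power_mono) auto
    moreover have "(cmod (c + \<i> * complex_of_real t))\<^sup>2 = (Re c)\<^sup>2 + (Im c + t)\<^sup>2"
      by (simp add: cmod_power2)
    ultimately show ?thesis by linarith
  qed
  define t where "t = ((norm h)\<^sup>2 + 1) / (2 * Im c)"
  have "2 * Im c * t = (norm h)\<^sup>2 + 1" using nz unfolding t_def by simp
  moreover have "(Re c)\<^sup>2 + (Im c + t)\<^sup>2 = (Re c)\<^sup>2 + (Im c)\<^sup>2 + 2 * Im c * t + t\<^sup>2"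
    by (simp add: power2_eq_square algebra_simps)
  moreover have "(Re c)\<^sup>2 \<ge> 0" "(Im c)\<^sup>2 \<ge> 0" by auto
  ultimately show False using key[of t] by linarith
qed

lemma spec_shift:
  "c \<in> spec (t *\<^sub>R 1 - a) \<longleftrightarrow> complex_of_real t - c \<in> spec a"
proof -
  have eq: "t *\<^sub>R 1 - a - emb J c = - (a - emb J (complex_of_real t - c))"
    unfolding emb_diff emb_of_real by simp
  show ?thesis unfolding spec_def by (simp only: mem_Collect_eq eq inv_uminus)
qed

end



context cstar begin

definition E :: "real \<Rightarrow> 'a" where "E t = emb J (cis t)"

lemma E_eq: "E t = cos t *\<^sub>R 1 + sin t *\<^sub>R J"
  unfolding E_def emb_def by simp

lemma E_add: "E a * E b = E (a + b)"
  unfolding E_def by (simp flip: emb_mult add: cis_mult)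

lemma E_zero[simp]: "E 0 = 1" unfolding E_def by simp

lemma E_power: "E t ^ m = E (real m * t)"
proof -
  have "E t ^ m = emb J (cis t ^ m)" unfolding E_def by (simp add: emb_power)
  then show ?thesis by (simp add: Complex.DeMoivre E_def)
qed

lemma E_central: "E t * x = x * E t" unfolding E_def by (rule emb_central)

lemma norm_E_mult: "norm (E t * x) = norm x"
  unfolding E_def norm_emb_mult by simp

lemma E_2pi_int: "E (2 * pi * of_int k) = 1"
  unfolding E_eq by simp

lemma E_deriv: "(E has_vector_derivative (J * E t)) (at t within S)"
proof -
  have "((\<lambda>t. cos t *\<^sub>R (1::'a) + sin t *\<^sub>R J) has_vector_derivative
        (cos t *\<^sub>R 0 + (- sin t) *\<^sub>R 1 + (sin t *\<^sub>R 0 + cos t *\<^sub>R J))) (at t within S)"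
    by (intro derivative_eq_intros has_vector_derivative_scaleR) auto
  moreover have "cos t *\<^sub>R 0 + (- sin t) *\<^sub>R 1 + (sin t *\<^sub>R 0 + cos t *\<^sub>R J) = J * E t"
    unfolding E_eq by (simp add: distrib_left JJ)
  ultimately show ?thesis unfolding E_eq[abs_def] by simp
qed

lemma E_cont: "continuous_on S E"
  unfolding E_eq[abs_def] by (intro continuous_intros)

lemma E_lin_deriv: "((\<lambda>t. E (k * t)) has_vector_derivative (k *\<^sub>R (J * E (k * t)))) (at t within S)"
proof -
  have "((\<lambda>t. k * t) has_vector_derivative k) (at t within S)"
    using has_vector_derivative_real_field[of "\<lambda>t. k * t"] 
    by (auto intro!: derivative_eq_intros)
  from vector_diff_chain_within[OF this E_deriv] show ?thesis by (simp add: comp_def)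
qed

lemma E_int_zero:
  assumes "k \<noteq> 0"
  shows "((\<lambda>t. E (of_int k * t)) has_integral 0) {0..2*pi}"
proof -
  define A where "A t = - ((1 / of_int k) *\<^sub>R (J * E (of_int k * t)))" for t
  have "\<And>t. t \<in> {0..2*pi} \<Longrightarrow> (A has_vector_derivative E (of_int k * t)) (at t within {0..2*pi})"
  proof -
    fix t
    have d1: "((\<lambda>t. J * E (of_int k * t)) has_vector_derivative (J * (of_int k *\<^sub>R (J * E (of_int k * t)))))
          (at t within {0..2*pi})"
      by (rule has_vector_derivative_mult_right[OF E_lin_deriv])
    have d2: "((\<lambda>t. (1 / of_int k) *\<^sub>R (J * E (of_int k * t))) has_vector_derivative
        ((1 / of_int k) *\<^sub>R (J * (of_int k *\<^sub>R (J * E (of_int k * t)))) + 0 *\<^sub>R (J * E (of_int k * t))))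
          (at t within {0..2*pi})"
      by (rule has_vector_derivative_scaleR[OF DERIV_const d1])
    have "(A has_vector_derivative - ((1 / of_int k) *\<^sub>R (J * (of_int k *\<^sub>R (J * E (of_int k * t))))))
          (at t within {0..2*pi})"
      unfolding A_def using has_vector_derivative_minus[OF d2] by simp
    moreover have "- ((1 / of_int k) *\<^sub>R (J * (of_int k *\<^sub>R (J * E (of_int k * t))))) = E (of_int k * t)"
    proof -
      have "J * (of_int k *\<^sub>R (J * E (of_int k * t))) = of_int k *\<^sub>R ((J * J) * E (of_int k * t))"
        by (simp add: mult.assoc)
      then show ?thesis using assms by (simp add: JJ)
    qed
    ultimately show "(A has_vector_derivative E (of_int k * t)) (at t within {0..2*pi})" by simp
  qed
  from fundamental_theorem_of_calculus[OF _ this] have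
    "((\<lambda>t. E (of_int k * t)) has_integral (A (2*pi) - A 0)) {0..2*pi}" by simp
  moreover have "A (2*pi) = A 0"
    unfolding A_def using E_2pi_int[of k] by (simp add: mult.commute mult.left_commute)
  ultimately show ?thesis by simp
qed

end



context cstar begin

lemma E_int: "(E has_integral 0) {0..2*pi}"
  using E_int_zero[of 1] by simp

lemma mean_value:
  assumes R: "R > 0" and inv: "\<And>\<mu>. cmod \<mu> \<le> R \<Longrightarrow> alg_invertible (1 - emb J \<mu> * y)"
  shows "\<And>s. \<bar>s\<bar> \<le> R \<Longrightarrow> alg_invertible (1 - s *\<^sub>R (E t * y))"
    "((\<lambda>t. ainv (1 - R *\<^sub>R (E t * y))) has_integral (2 * pi) *\<^sub>R 1) {0..2*pi}"
proof -
  define G where "G s t = 1 - s *\<^sub>R (E t * y)" for s t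
  define F where "F s t = ainv (G s t)" for s t
  define D where "D s t = F s t * (E t * y) * F s t" for s t
  define U where "U = {-R..R}"
  have Ginv: "alg_invertible (G s t)" if "\<bar>s\<bar> \<le> R" for s t
  proof -
    have "emb J (complex_of_real s * cis t) * y = s *\<^sub>R (E t * y)"
      unfolding emb_mult emb_of_real E_def by (simp add: mult.assoc)
    moreover have "cmod (complex_of_real s * cis t) \<le> R" using that by (simp add: norm_mult)
    ultimately show ?thesis using inv[of "complex_of_real s * cis t"] unfolding G_def by simp
  qed
  show "\<And>s. \<bar>s\<bar> \<le> R \<Longrightarrow> alg_invertible (1 - s *\<^sub>R (E t * y))" using Ginv G_def by simp
  have UR: "s \<in> U \<Longrightarrow> \<bar>s\<bar> \<le> R" for s unfolding U_def by auto
  have JG: "J * G s t = G s t * J" for s t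
  proof -
    have "J * (E t * y) = E t * y * J" by (metis Jc mult.assoc)
    then show ?thesis unfolding G_def by (simp add: algebra_simps)
  qed
  have JF: "J * F s t = F s t * J" if "\<bar>s\<bar> \<le> R" for s t
    using ainv_commute[OF Ginv[OF that] JG] F_def by simp
  have dS: "((\<lambda>s. F s t) has_vector_derivative D s t) (at s within U)" if "s \<in> U" for s t
  proof -
    have g: "((\<lambda>s. G s t) has_derivative (\<lambda>h. - (h *\<^sub>R (E t * y)))) (at s within U)"
      unfolding G_def by (auto intro!: derivative_eq_intros)
    have "((\<lambda>s. F s t) has_derivative (\<lambda>h. - (F s t * (- (h *\<^sub>R (E t * y))) * F s t))) (at s within U)"
      unfolding F_def by (rule has_derivative_compose[OF g ainv_has_derivative[OF Ginv[OF UR[OF that]]]])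
    then show ?thesis unfolding has_vector_derivative_def D_def
      by (rule has_derivative_eq_rhs) (simp add: fun_eq_iff)
  qed
  have dT: "((\<lambda>t. F s t) has_vector_derivative s *\<^sub>R (J * D s t)) (at t within V)"
    if "\<bar>s\<bar> \<le> R" for s t V
  proof -
    have e: "((\<lambda>t. E t * y) has_vector_derivative (J * E t) * y) (at t within V)"
      by (rule has_vector_derivative_mult_left[OF E_deriv])
    have "((\<lambda>t. G s t) has_vector_derivative 0 - (s *\<^sub>R ((J * E t) * y) + 0 *\<^sub>R (E t * y))) (at t within V)"
      unfolding G_def by (intro has_vector_derivative_diff has_vector_derivative_const
          has_vector_derivative_scaleR[OF DERIV_const e])
    then have g: "((\<lambda>t. G s t) has_derivative (\<lambda>h. h *\<^sub>R (- (s *\<^sub>R ((J * E t) * y))))) (at t within V)"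
      unfolding has_vector_derivative_def by simp
    have "((\<lambda>t. F s t) has_derivative (\<lambda>h. - (F s t * (h *\<^sub>R (- (s *\<^sub>R ((J * E t) * y)))) * F s t))) (at t within V)"
      unfolding F_def by (rule has_derivative_compose[OF g ainv_has_derivative[OF Ginv[OF that]]])
    moreover have eqf: "F s t * (J * E t * y) * F s t = J * D s t"
      unfolding D_def using JF[OF that, of t] by (metis mult.assoc)
    ultimately show ?thesis unfolding has_vector_derivative_def
      by (elim has_derivative_eq_rhs) (simp add: fun_eq_iff)
  qed
  have contF: "continuous_on S (\<lambda>p. F (fst p) (snd p))" if "\<And>p. p \<in> S \<Longrightarrow> \<bar>fst p\<bar> \<le> R" for S
  proof -
    have cG: "continuous_on S (\<lambda>p. G (fst p) (snd p))"
      unfolding G_def E_eq by (intro continuous_intros)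
    show ?thesis unfolding F_def
      by (rule continuous_on_compose2[OF ainv_continuous_on cG]) (use Ginv that in auto)
  qed
  have contD: "continuous_on (U \<times> cbox 0 (2*pi)) (\<lambda>(s, t). D s t)"
  proof -
    have c: "continuous_on (U \<times> cbox 0 (2*pi)) (\<lambda>p. F (fst p) (snd p))"
      by (rule contF) (auto simp: U_def)
    have "continuous_on (U \<times> cbox 0 (2*pi)) (\<lambda>p. F (fst p) (snd p) * (E (snd p) * y) * F (fst p) (snd p))"
      unfolding E_eq by (intro continuous_intros c[unfolded E_eq])
    then show ?thesis unfolding D_def by (simp add: case_prod_beta)
  qed
  have contFs: "continuous_on S (F s)" if "\<bar>s\<bar> \<le> R" for s S
  proof -
    have c: "continuous_on ((\<lambda>t. (s, t)) ` S) (\<lambda>p. F (fst p) (snd p))"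
      by (rule contF) (use that in auto)
    have cp: "continuous_on S (\<lambda>t. (s, t))" by (intro continuous_intros)
    show ?thesis using continuous_on_compose[OF cp c] by (simp add: comp_def)
  qed
  have intF: "F s integrable_on cbox 0 (2*pi)" if "s \<in> U" for s
    using contFs[OF UR[OF that]] integrable_continuous by blast
  have intD: "(D s has_integral 0) {0..2*pi}" if "s \<in> U" for s
  proof (cases "s = 0")
    case True
    have "D 0 = (\<lambda>t. E t * y)" unfolding D_def F_def G_def by (simp add: ainv_one fun_eq_iff)
    then show ?thesis using True has_integral_mult_left[OF E_int, of y] by simp
  next
    case False
    have "((\<lambda>t. s *\<^sub>R (J * D s t)) has_integral (F s (2*pi) - F s 0)) {0..2*pi}"
      by (rule fundamental_theorem_of_calculus) (use dT UR[OF that] in auto)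
    moreover have "F s (2*pi) = F s 0"
      unfolding F_def G_def using E_2pi_int[of 1] by simp
    ultimately have "((\<lambda>t. s *\<^sub>R (J * D s t)) has_integral 0) {0..2*pi}" by simp
    from has_integral_mult_right[OF this, of "(1 / s) *\<^sub>R (- J)"]
    have "((\<lambda>t. (1 / s) *\<^sub>R (- J) * (s *\<^sub>R (J * D s t))) has_integral 0) {0..2*pi}" by simp
    moreover have "(1 / s) *\<^sub>R (- J) * (s *\<^sub>R (J * D s t)) = D s t" for t
    proof -
      have "(1 / s) *\<^sub>R (- J) * (s *\<^sub>R (J * D s t)) = - ((J * J) * D s t)"
        using False by (simp add: mult.assoc)
      then show ?thesis by (simp add: JJ)
    qed
    ultimately show ?thesis by simp
  qed
  define I where "I s = integral (cbox 0 (2*pi)) (F s)" for s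
  have dI: "(I has_derivative (\<lambda>h. 0)) (at s within U)" if "s \<in> U" for s
  proof -
    have "(I has_vector_derivative integral (cbox 0 (2*pi)) (D s)) (at s within U)"
      unfolding I_def
      by (rule leibniz_rule_vector_derivative[OF _ intF contD that])
         (use dS in \<open>auto simp: U_def\<close>)
    moreover have "integral (cbox 0 (2*pi)) (D s) = 0" using intD[OF that] by (simp add: integral_unique)
    ultimately show ?thesis unfolding has_vector_derivative_def by simp
  qed
  obtain c where c: "\<And>s. s \<in> U \<Longrightarrow> I s = c"
    using has_derivative_zero_constant[of U I] dI unfolding U_def by auto
  have "I 0 = (2 * pi) *\<^sub>R 1"
  proof -
    have "F 0 = (\<lambda>t. 1)" unfolding F_def G_def by (simp add: ainv_one fun_eq_iff)
    then show ?thesis unfolding I_def by simp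
  qed
  moreover have "0 \<in> U" "R \<in> U" using R unfolding U_def by auto
  ultimately have "I R = (2 * pi) *\<^sub>R 1" using c by metis
  then show "((\<lambda>t. ainv (1 - R *\<^sub>R (E t * y))) has_integral (2 * pi) *\<^sub>R 1) {0..2*pi}"
    using intF[OF \<open>R \<in> U\<close>] unfolding I_def F_def G_def
    by (simp add: has_integral_integrable_integral)
qed


lemma power_mult_comm:
  fixes a b :: "'b::ring_1"
  assumes "a * b = b * a"
  shows "(a * b) ^ m = a ^ m * b ^ m"
proof (induction m)
  case (Suc m)
  have ba: "b * a ^ m = a ^ m * b"
    using assms by (metis power_commuting_commutes)
  have "(a * b) ^ Suc m = a * b * (a ^ m * b ^ m)" using Suc by simp
  also have "\<dots> = a * (b * a ^ m) * b ^ m" by (simp add: mult.assoc)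
  also have "\<dots> = a ^ Suc m * b ^ Suc m" unfolding ba by (simp add: mult.assoc)
  finally show ?case .
qed simp

lemma cauchy_est:
  assumes R: "R > 0" and inv: "\<And>\<mu>. cmod \<mu> \<le> R \<Longrightarrow> alg_invertible (1 - emb J \<mu> * y)"
  shows "\<exists>M. \<forall>n. R ^ n * norm (y ^ n) \<le> M"
proof -
  note MV = mean_value[OF R inv]
  define F where "F t = ainv (1 - R *\<^sub>R (E t * y))" for t
  have Rinv: "alg_invertible (1 - R *\<^sub>R (E t * y))" for t
    using MV(1) R by simp
  have Finv: "(1 - R *\<^sub>R (E t * y)) * F t = 1" for t
    unfolding F_def by (rule ainv_props(1)[OF Rinv])
  have intF: "(F has_integral (2 * pi) *\<^sub>R 1) {0..2*pi}" unfolding F_def[abs_def] by (rule MV(2))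
  have contF: "continuous_on {0..2*pi} F"
  proof -
    have c1: "continuous_on {0..2*pi} (\<lambda>t. 1 - R *\<^sub>R (E t * y))"
      unfolding E_eq by (intro continuous_intros)
    show ?thesis unfolding F_def
      by (rule continuous_on_compose2[OF ainv_continuous_on c1]) (use Rinv in blast)
  qed
  have "compact (F ` {0..2*pi})" by (rule compact_continuous_image[OF contF compact_Icc])
  then have "bounded (F ` {0..2*pi})" by (rule compact_imp_bounded)
  then obtain M where M0: "\<forall>x\<in>F ` {0..2*pi}. norm x \<le> M"
    unfolding bounded_iff by (elim exE) simp
  have M: "\<And>t. t \<in> {0..2*pi} \<Longrightarrow> norm (F t) \<le> M" using M0 by blast
  have "R ^ n * norm (y ^ n) \<le> M" for n
  proof -
    define x where "x t = R *\<^sub>R (E t * y)" for t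
    have F1: "F t = 1 + x t * F t" for t
      using Finv[of t] unfolding x_def by (simp add: algebra_simps)
    have expand: "F t = (\<Sum>m<k. x t ^ m) + x t ^ k * F t" for t k
    proof (induction k)
      case (Suc k)
      have a: "x t ^ k * F t = x t ^ k * (1 + x t * F t)" by (rule arg_cong[where f="\<lambda>z. x t ^ k * z", OF F1])
      also have "\<dots> = x t ^ k + x t ^ Suc k * F t" by (simp only: distrib_left mult_1_right power_Suc2 mult.assoc)
      finally have b: "x t ^ k * F t = x t ^ k + x t ^ Suc k * F t" .
      have "F t = (\<Sum>m<k. x t ^ m) + x t ^ k * F t" by (rule Suc.IH)
      also have "\<dots> = (\<Sum>m<k. x t ^ m) + (x t ^ k + x t ^ Suc k * F t)" unfolding b ..
      also have "\<dots> = (\<Sum>m<Suc k. x t ^ m) + x t ^ Suc k * F t" by (simp add: add.assoc)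
      finally show ?case .
    qed simp
    have xpow: "x t ^ m = R ^ m *\<^sub>R (E (real m * t) * y ^ m)" for t m
    proof -
      have "x t ^ m = R ^ m *\<^sub>R ((E t * y) ^ m)" unfolding x_def
        by (induction m) (simp_all add: mult.assoc)
      also have "(E t * y) ^ m = E t ^ m * y ^ m" by (rule power_mult_comm[OF E_central])
      finally show ?thesis by (simp add: E_power)
    qed
    define K where "K t = E (- (real n * t)) * F t" for t
    have Keq: "K t = (\<Sum>m<n. R ^ m *\<^sub>R (E (of_int (int m - int n) * t) * y ^ m)) + R ^ n *\<^sub>R (y ^ n * F t)" for t
    proof -
      have "K t = (\<Sum>m<n. E (- (real n * t)) * x t ^ m) + E (- (real n * t)) * (x t ^ n * F t)"
        unfolding K_def by (subst expand[of t n]) (simp add: distrib_left sum_distrib_left)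
      also have "(\<Sum>m<n. E (- (real n * t)) * x t ^ m) = (\<Sum>m<n. R ^ m *\<^sub>R (E (of_int (int m - int n) * t) * y ^ m))"
      proof (rule sum.cong)
        fix m assume "m \<in> {..<n}"
        have "E (- (real n * t)) * x t ^ m = R ^ m *\<^sub>R ((E (- (real n * t)) * E (real m * t)) * y ^ m)"
          unfolding xpow by (simp add: mult.assoc)
        also have "E (- (real n * t)) * E (real m * t) = E (of_int (int m - int n) * t)"
          unfolding E_add by (simp add: algebra_simps)
        finally show "E (- (real n * t)) * x t ^ m = R ^ m *\<^sub>R (E (of_int (int m - int n) * t) * y ^ m)" .
      qed simp
      also have "E (- (real n * t)) * (x t ^ n * F t) = R ^ n *\<^sub>R (y ^ n * F t)"
      proof -
        have "E (- (real n * t)) * (x t ^ n * F t) = R ^ n *\<^sub>R ((E (- (real n * t)) * E (real n * t)) * y ^ n * F t)"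
          unfolding xpow by (simp add: mult.assoc)
        also have "E (- (real n * t)) * E (real n * t) = 1" unfolding E_add by simp
        finally show ?thesis by (simp add: mult.assoc)
      qed
      finally show ?thesis .
    qed
    have h1: "((\<lambda>t. \<Sum>m<n. R ^ m *\<^sub>R (E (of_int (int m - int n) * t) * y ^ m)) has_integral
        (\<Sum>m<n. R ^ m *\<^sub>R (0::'a))) {0..2*pi}"
    proof (rule has_integral_sum[OF finite_lessThan])
      fix m assume "m \<in> {..<n}"
      then have "int m - int n \<noteq> 0" by simp
      from has_integral_mult_left[OF E_int_zero[OF this], of "y ^ m"]
      have "((\<lambda>t. E (of_int (int m - int n) * t) * y ^ m) has_integral 0) {0..2*pi}" by simp
      then show "((\<lambda>t. R ^ m *\<^sub>R (E (of_int (int m - int n) * t) * y ^ m)) has_integral R ^ m *\<^sub>R 0) {0..2*pi}"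
        by (rule has_integral_cmul)
    qed
    have h2: "((\<lambda>t. R ^ n *\<^sub>R (y ^ n * F t)) has_integral R ^ n *\<^sub>R (y ^ n * ((2 * pi) *\<^sub>R 1))) {0..2*pi}"
      by (rule has_integral_cmul[OF has_integral_mult_right[OF intF]])
    have "K = (\<lambda>t. (\<Sum>m<n. R ^ m *\<^sub>R (E (of_int (int m - int n) * t) * y ^ m)) + R ^ n *\<^sub>R (y ^ n * F t))"
      using Keq by (simp add: fun_eq_iff)
    then have "(K has_integral ((\<Sum>m<n. R ^ m *\<^sub>R (0::'a)) + R ^ n *\<^sub>R (y ^ n * ((2 * pi) *\<^sub>R 1)))) {0..2*pi}"
      using has_integral_add[OF h1 h2] by simp
    then have Kint: "(K has_integral (2 * pi * R ^ n) *\<^sub>R y ^ n) {0..2*pi}" by (simp add: mult.commute)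
    have "norm (F 0) \<le> M" using M by simp
    then have Mpos: "0 \<le> M" by (meson order_trans norm_ge_zero)
    have b1: "norm ((2 * pi * R ^ n) *\<^sub>R y ^ n) \<le> M * Henstock_Kurzweil_Integration.content (cbox 0 (2*pi))"
    proof (rule has_integral_bound[OF Mpos])
      show "(K has_integral (2 * pi * R ^ n) *\<^sub>R y ^ n) (cbox 0 (2*pi))" using Kint by simp
      fix t assume "t \<in> cbox 0 (2*pi)"
      then show "norm (K t) \<le> M" unfolding K_def norm_E_mult using M by simp
    qed
    have "0 \<le> 2 * pi * R ^ n" using R by simp
    then have b2: "norm ((2 * pi * R ^ n) *\<^sub>R y ^ n) = (2 * pi * R ^ n) * norm (y ^ n)" by simp
    have b3: "Henstock_Kurzweil_Integration.content (cbox 0 (2*pi)) = 2 * pi" by simp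
    have "(2 * pi * R ^ n) * norm (y ^ n) \<le> M * (2 * pi)" using b1 unfolding b2 b3 .
    then have "(2 * pi) * (R ^ n * norm (y ^ n)) \<le> (2 * pi) * M"
      unfolding mult.assoc[of "2*pi"] mult.commute[of M] .
    then show ?thesis using pi_gt_zero by (simp only: mult_le_cancel_left_pos)
  qed
  then show ?thesis by blast
qed

end



context cstar begin

lemma inv_neg_emb:
  assumes "c \<noteq> 0" shows "alg_invertible (- emb J c)"
proof -
  have e1: "emb J c * emb J (inverse c) = 1" using emb_inv[OF assms] .
  have e2: "emb J (inverse c) * emb J c = 1" using e1 emb_central by metis
  have "(- emb J c) * (- emb J (inverse c)) = 1" using e1 by simp
  moreover have "(- emb J (inverse c)) * (- emb J c) = 1" using e2 by simp
  ultimately show ?thesis by (rule ainv_eqI(1))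
qed

lemma sa_power_norm:
  assumes sa: "star h = h"
  shows "norm (h ^ (2 ^ k)) = norm h ^ (2 ^ k)"
proof (induction k)
  case (Suc k)
  let ?g = "h ^ (2 ^ k)"
  have sg: "star ?g = ?g" by (simp add: star_power sa)
  have "h ^ (2 ^ Suc k) = ?g * ?g" by (simp add: power_add[symmetric] mult_2)
  then have "norm (h ^ (2 ^ Suc k)) = (norm ?g)\<^sup>2" using cst[of ?g] sg by simp
  also have "\<dots> = norm h ^ (2 ^ Suc k)" using Suc by (simp add: power_mult[symmetric] mult.commute)
  finally show ?case .
qed simp

lemma sa_norm_le:
  assumes sa: "star h = h" and r: "0 \<le> r" and sp: "\<And>c. c \<in> spec h \<Longrightarrow> cmod c \<le> r"
  shows "norm h \<le> r"
proof (rule ccontr)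
  assume "\<not> norm h \<le> r"
  then have hr: "r < norm h" by simp
  define R where "R = 2 / (norm h + r)"
  have R0: "R > 0" using hr r unfolding R_def by simp
  have Rh: "R * norm h > 1" using hr r unfolding R_def by (simp add: field_simps)
  have inv: "alg_invertible (1 - emb J \<mu> * h)" if "cmod \<mu> \<le> R" for \<mu>
  proof (cases "\<mu> = 0")
    case True then show ?thesis by (simp add: inv_one)
  next
    case False
    have "cmod (inverse \<mu>) = 1 / cmod \<mu>" by (simp add: norm_inverse divide_inverse)
    also have "\<dots> \<ge> 1 / R" using that False by (intro divide_left_mono) (auto simp: R0)
    finally have "cmod (inverse \<mu>) \<ge> (norm h + r) / 2" unfolding R_def by simp
    moreover have "r < (norm h + r) / 2" using hr by (simp add: field_simps)
    ultimately have "cmod (inverse \<mu>) > r" by linarith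
    then have "inverse \<mu> \<notin> spec h" using sp by force
    then have i1: "alg_invertible (h - emb J (inverse \<mu>))" unfolding spec_def by simp
    have "alg_invertible ((- emb J \<mu>) * (h - emb J (inverse \<mu>)))"
      by (rule inv_mult[OF inv_neg_emb[OF False] i1])
    moreover have "(- emb J \<mu>) * (h - emb J (inverse \<mu>)) = 1 - emb J \<mu> * h"
      using emb_inv[OF False] by (simp add: right_diff_distrib)
    ultimately show ?thesis by simp
  qed
  obtain M where M: "\<And>n. R ^ n * norm (h ^ n) \<le> M" using cauchy_est[OF R0 inv] by blast
  have "(R * norm h) ^ (2 ^ k) \<le> M" for k
    using M[of "2 ^ k"] sa_power_norm[OF sa, of k] by (simp add: power_mult_distrib)
  moreover obtain n where n: "M < (R * norm h) ^ n" using real_arch_pow[OF Rh] by blast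
  moreover have "(R * norm h) ^ n \<le> (R * norm h) ^ (2 ^ n)"
    using Rh by (intro power_increasing) (auto intro: less_imp_le)
  ultimately show False by (smt (verit))
qed

lemma pos_sa: "cpositive J star p \<Longrightarrow> star p = p"
  unfolding cpositive_def by simp

lemma pos_spec: "cpositive J star p \<Longrightarrow> c \<in> spec p \<Longrightarrow> Im c = 0 \<and> Re c \<ge> 0"
  unfolding cpositive_def cspectrum_eq by auto

lemma pos_intro: "star p = p \<Longrightarrow> (\<And>c. c \<in> spec p \<Longrightarrow> Re c \<ge> 0) \<Longrightarrow> cpositive J star p"
  unfolding cpositive_def cspectrum_eq using sa_spec_real by auto

lemma star_t1: "star (t *\<^sub>R 1 - p) = t *\<^sub>R 1 - star p"
  by (simp add: star_diff star_scaleR)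

lemma pos_shift_norm:
  assumes p: "cpositive J star p" and t: "norm p \<le> t"
  shows "norm (t *\<^sub>R 1 - p) \<le> t"
proof (rule sa_norm_le)
  show "star (t *\<^sub>R 1 - p) = t *\<^sub>R 1 - p" using pos_sa[OF p] by (simp add: star_t1)
  show "0 \<le> t" using t norm_ge_zero order_trans by blast
  fix c assume "c \<in> spec (t *\<^sub>R 1 - p)"
  then have c: "complex_of_real t - c \<in> spec p" using spec_shift by simp
  from pos_spec[OF p c] have "Im c = 0" "Re c \<le> t" by auto
  moreover have "cmod (complex_of_real t - c) \<le> t" using spec_bound[OF c] t by simp
  moreover have "cmod (complex_of_real t - c) = \<bar>t - Re c\<bar>" using \<open>Im c = 0\<close> by (simp add: cmod_eq_Re)
  moreover have "cmod c = \<bar>Re c\<bar>" using \<open>Im c = 0\<close> by (simp add: cmod_eq_Re)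
  ultimately show "cmod c \<le> t" by linarith
qed

lemma pos_of_shift_norm:
  assumes sa: "star h = h" and t: "0 \<le> t" and n: "norm (t *\<^sub>R 1 - h) \<le> t"
  shows "cpositive J star h"
proof (rule pos_intro[OF sa])
  fix c assume c: "c \<in> spec h"
  have im: "Im c = 0" by (rule sa_spec_real[OF sa c])
  have "complex_of_real t - c \<in> spec (t *\<^sub>R 1 - h)" using spec_shift c by simp
  then have "cmod (complex_of_real t - c) \<le> t" using spec_bound n by (meson order_trans)
  moreover have "cmod (complex_of_real t - c) = \<bar>t - Re c\<bar>" using im by (simp add: cmod_eq_Re)
  ultimately show "Re c \<ge> 0" by linarith
qed

lemma pos_add:
  assumes p: "cpositive J star p" and q: "cpositive J star q"
  shows "cpositive J star (p + q)"
proof (rule pos_of_shift_norm)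
  show "star (p + q) = p + q" using pos_sa[OF p] pos_sa[OF q] sadd by simp
  show "0 \<le> norm p + norm q" by simp
  have "(norm p + norm q) *\<^sub>R 1 - (p + q) = (norm p *\<^sub>R 1 - p) + (norm q *\<^sub>R 1 - q)"
    by (simp add: scaleR_add_left)
  then have "norm ((norm p + norm q) *\<^sub>R 1 - (p + q)) \<le> norm (norm p *\<^sub>R 1 - p) + norm (norm q *\<^sub>R 1 - q)"
    using norm_triangle_ineq by metis
  also have "\<dots> \<le> norm p + norm q"
    using pos_shift_norm[OF p order_refl] pos_shift_norm[OF q order_refl] by simp
  finally show "norm ((norm p + norm q) *\<^sub>R 1 - (p + q)) \<le> norm p + norm q" .
qed

lemma pos_mono:
  assumes a: "cpositive J star a" and ba: "cpositive J star (b - a)"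
  shows "norm a \<le> norm b"
proof -
  define t where "t = norm b"
  have sb: "star b = b"
  proof -
    have "star b = star a + star (b - a)" using sadd[of a "b - a"] by simp
    then show ?thesis using pos_sa[OF a] pos_sa[OF ba] by simp
  qed
  have tb: "cpositive J star (t *\<^sub>R 1 - b)"
  proof (rule pos_intro)
    show "star (t *\<^sub>R 1 - b) = t *\<^sub>R 1 - b" using sb by (simp add: star_t1)
    fix c assume "c \<in> spec (t *\<^sub>R 1 - b)"
    then have c: "complex_of_real t - c \<in> spec b" using spec_shift by simp
    have "Im (complex_of_real t - c) = 0" by (rule sa_spec_real[OF sb c])
    then have im: "Im c = 0" by simp
    have "cmod (complex_of_real t - c) \<le> t" using spec_bound[OF c] t_def by simp
    moreover have "cmod (complex_of_real t - c) = \<bar>t - Re c\<bar>" using im by (simp add: cmod_eq_Re)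
    ultimately show "Re c \<ge> 0" by linarith
  qed
  have ta: "cpositive J star (t *\<^sub>R 1 - a)"
  proof -
    have "t *\<^sub>R 1 - a = (t *\<^sub>R 1 - b) + (b - a)" by simp
    then show ?thesis using pos_add[OF tb ba] by simp
  qed
  show ?thesis unfolding t_def[symmetric]
  proof (rule sa_norm_le[OF pos_sa[OF a]])
    show "0 \<le> t" using t_def by simp
    fix c assume c: "c \<in> spec a"
    from pos_spec[OF a c] have im: "Im c = 0" and re: "Re c \<ge> 0" by auto
    have "complex_of_real t - (complex_of_real t - c) \<in> spec a" using c by simp
    then have "complex_of_real t - c \<in> spec (t *\<^sub>R 1 - a)" using spec_shift by blast
    from pos_spec[OF ta this] have "Re c \<le> t" by simp
    then show "cmod c \<le> t" using im re by (simp add: cmod_eq_Re)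
  qed
qed

end



lemma chain_le:
  fixes Dd :: "'x \<Rightarrow> 'x \<Rightarrow> real"
  assumes tri: "\<And>x y z. x \<in> X \<Longrightarrow> y \<in> X \<Longrightarrow> z \<in> X \<Longrightarrow> Dd x y \<le> Dd x z + Dd z y"
    and refl: "\<And>x. x \<in> X \<Longrightarrow> Dd x x = 0"
    and sX: "\<And>n. s n \<in> X"
  shows "m \<le> n \<Longrightarrow> Dd (s m) (s n) \<le> sum (\<lambda>i. Dd (s i) (s (Suc i))) {m..<n}"
proof (induction n rule: dec_induct)
  case base then show ?case using refl sX by simp
next
  case (step n)
  have "Dd (s m) (s (Suc n)) \<le> Dd (s m) (s n) + Dd (s n) (s (Suc n))" using tri sX by blast
  also have "\<dots> \<le> sum (\<lambda>i. Dd (s i) (s (Suc i))) {m..<n} + Dd (s n) (s (Suc n))" using step by simp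
  also have "\<dots> = sum (\<lambda>i. Dd (s i) (s (Suc i))) {m..<Suc n}" using step by simp
  finally show ?case .
qed

lemma cauchy_of_summable:
  fixes Dd :: "'x \<Rightarrow> 'x \<Rightarrow> real"
  assumes tri: "\<And>x y z. x \<in> X \<Longrightarrow> y \<in> X \<Longrightarrow> z \<in> X \<Longrightarrow> Dd x y \<le> Dd x z + Dd z y"
    and refl: "\<And>x. x \<in> X \<Longrightarrow> Dd x x = 0"
    and sym: "\<And>x y. x \<in> X \<Longrightarrow> y \<in> X \<Longrightarrow> Dd x y = Dd y x"
    and sX: "\<And>n. s n \<in> X"
    and sm: "summable (\<lambda>i. Dd (s i) (s (Suc i)))"
  shows "\<forall>e>0. \<exists>N. \<forall>n\<ge>N. \<forall>m\<ge>N. Dd (s n) (s m) < e"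
proof (intro allI impI)
  fix e :: real assume e: "e > 0"
  obtain N where N: "\<And>m n. m \<ge> N \<Longrightarrow> norm (sum (\<lambda>i. Dd (s i) (s (Suc i))) {m..<n}) < e"
    using sm e unfolding summable_Cauchy by blast
  have "Dd (s n) (s m) < e" if "n \<ge> N" "m \<ge> N" for n m
  proof (cases "n \<le> m")
    case True
    have "Dd (s n) (s m) \<le> sum (\<lambda>i. Dd (s i) (s (Suc i))) {n..<m}"
      by (rule chain_le[OF tri refl sX True]) auto
    also have "\<dots> < e" using N[OF that(1), of m] by simp
    finally show ?thesis .
  next
    case False
    have "Dd (s m) (s n) \<le> sum (\<lambda>i. Dd (s i) (s (Suc i))) {m..<n}"
      by (rule chain_le[OF tri refl sX]) (use False in auto)
    also have "\<dots> < e" using N[OF that(2), of n] by simp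
    finally show ?thesis using sym sX by metis
  qed
  then show "\<exists>N. \<forall>n\<ge>N. \<forall>m\<ge>N. Dd (s n) (s m) < e" by blast
qed

lemma lim_unique_D:
  fixes Dd :: "'x \<Rightarrow> 'x \<Rightarrow> real"
  assumes tri: "\<And>x y z. x \<in> X \<Longrightarrow> y \<in> X \<Longrightarrow> z \<in> X \<Longrightarrow> Dd x y \<le> Dd x z + Dd z y"
    and sym: "\<And>x y. x \<in> X \<Longrightarrow> y \<in> X \<Longrightarrow> Dd x y = Dd y x"
    and zero: "\<And>x y. x \<in> X \<Longrightarrow> y \<in> X \<Longrightarrow> Dd x y \<le> 0 \<Longrightarrow> x = y"
    and zX: "\<And>n. z n \<in> X" and aX: "a \<in> X" and bX: "b \<in> X"
    and la: "(\<lambda>n. Dd (z n) a) \<longlonglongrightarrow> 0" and lb: "(\<lambda>n. Dd (z n) b) \<longlonglongrightarrow> 0"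
  shows "a = b"
proof -
  have "(\<lambda>n. Dd (z n) a + Dd (z n) b) \<longlonglongrightarrow> 0 + 0" by (intro tendsto_add la lb)
  moreover have "\<forall>n\<ge>0. Dd a b \<le> Dd (z n) a + Dd (z n) b"
    using tri[OF aX bX zX] sym[OF aX zX] by simp
  ultimately have "Dd a b \<le> 0 + 0" by (intro LIMSEQ_le_const) auto
  then show ?thesis using zero aX bX by simp
qed

lemma funpow_fix: "f u = u \<Longrightarrow> (f ^^ n) u = u"
  by (induction n) auto

lemma funpow_in: "(\<forall>x\<in>X. f x \<in> X) \<Longrightarrow> x \<in> X \<Longrightarrow> (f ^^ n) x \<in> X"
  by (induction n) auto


theorem theorem3p15:
  fixes J :: "'a::{real_normed_algebra_1,banach}"
    and star :: "'a \<Rightarrow> 'a"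
    and X :: "'x set"
    and d :: "'x \<Rightarrow> 'x \<Rightarrow> 'a"
    and T S :: "'x \<Rightarrow> 'x"
    and q \<delta> :: "'x \<Rightarrow> 'x \<Rightarrow> 'a"
  assumes "unital_cstar_algebra J star"
    and "cstar_metric J star X d"
    and "cstar_complete X d"
    and "\<forall>x\<in>X. T x \<in> X" and "\<forall>x\<in>X. S x \<in> X"
    and "\<forall>x\<in>X. \<forall>y\<in>X. norm (q x y) < 1"
    and "\<forall>x\<in>X. \<forall>y\<in>X. cpositive J star (\<delta> x y)"
    and "\<forall>x\<in>X. \<forall>y\<in>X. \<forall>n::nat. n \<ge> 1 \<longrightarrow>
           cle J star (d ((T ^^ n) x) ((S ^^ n) y)) ((star (q x y)) ^ n * \<delta> x y * (q x y) ^ n)"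
  shows "(orbitally_continuous X d T \<and> orbitally_continuous X d S) \<longleftrightarrow>
         (\<exists>!u. u \<in> X \<and> T u = u \<and> S u = u)"
proof -
  note cs = assms(1)
  interpret cstar J star by (rule cstar.intro[OF cs])
  define Dd where "Dd x y = norm (d x y)" for x y
  have met: "X \<noteq> {}" "\<And>x y. x \<in> X \<Longrightarrow> y \<in> X \<Longrightarrow> cpositive J star (d x y)"
    "\<And>x y. x \<in> X \<Longrightarrow> y \<in> X \<Longrightarrow> d x y = 0 \<longleftrightarrow> x = y"
    "\<And>x y. x \<in> X \<Longrightarrow> y \<in> X \<Longrightarrow> d x y = d y x"
  proof -
    have md1: "X \<noteq> {}"
      using assms(2) unfolding cstar_metric_def by (elim conjE) assumption
    have md2: "\<forall>x\<in>X. \<forall>y\<in>X. cpositive J star (d x y) \<and> (d x y = 0 \<longleftrightarrow> x = y) \<and> d x y = d y x"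
      using assms(2) unfolding cstar_metric_def by (elim conjE) assumption
    note md = md1 md2
    show "X \<noteq> {}" by (rule md(1))
    fix x y assume xy: "x \<in> X" "y \<in> X"
    note m = md(2)[rule_format, OF xy]
    show "cpositive J star (d x y)" using m by (elim conjE)
    show "d x y = 0 \<longleftrightarrow> x = y" using m by (elim conjE)
    show "d x y = d y x" using m by (elim conjE)
  qed
  have md3: "\<forall>x\<in>X. \<forall>y\<in>X. \<forall>z\<in>X. cle J star (d x y) (d x z + d z y)"
    using assms(2) unfolding cstar_metric_def by (elim conjE) assumption
  have met5: "\<And>x y z. x \<in> X \<Longrightarrow> y \<in> X \<Longrightarrow> z \<in> X \<Longrightarrow> cle J star (d x y) (d x z + d z y)"
    by (rule md3[rule_format])
  have tri: "Dd x y \<le> Dd x z + Dd z y" if "x \<in> X" "y \<in> X" "z \<in> X" for x y z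
  proof -
    have "norm (d x y) \<le> norm (d x z + d z y)"
      by (rule pos_mono[OF met(2)[OF that(1,2)]]) (use met5[OF that] in \<open>simp add: cle_def\<close>)
    also have "\<dots> \<le> norm (d x z) + norm (d z y)" by (rule norm_triangle_ineq)
    finally show ?thesis unfolding Dd_def .
  qed
  have refl: "Dd x x = 0" if "x \<in> X" for x using met(3)[OF that that] Dd_def by simp
  have sym: "Dd x y = Dd y x" if "x \<in> X" "y \<in> X" for x y using met(4)[OF that] Dd_def by simp
  have zero: "x = y" if "x \<in> X" "y \<in> X" "Dd x y \<le> 0" for x y
  proof -
    have "d x y = 0" using that(3) Dd_def by simp
    then show ?thesis using met(3)[OF that(1,2)] by simp
  qed
  have TX: "(T ^^ n) x \<in> X" if "x \<in> X" for n x using funpow_in[OF assms(4) that] .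
  have SX: "(S ^^ n) x \<in> X" if "x \<in> X" for n x using funpow_in[OF assms(5) that] .
  have bound: "Dd ((T ^^ n) x) ((S ^^ n) y) \<le> norm (\<delta> x y) * (norm (q x y) ^ 2) ^ n"
    if "x \<in> X" "y \<in> X" "n \<ge> 1" for x y n
  proof -
    have c: "cle J star (d ((T ^^ n) x) ((S ^^ n) y)) ((star (q x y)) ^ n * \<delta> x y * (q x y) ^ n)"
      by (rule assms(8)[rule_format, OF that(1,2,3)])
    have "norm (d ((T ^^ n) x) ((S ^^ n) y)) \<le> norm ((star (q x y)) ^ n * \<delta> x y * (q x y) ^ n)"
    proof -
      have c2: "cpositive J star ((star (q x y)) ^ n * \<delta> x y * (q x y) ^ n - d ((T ^^ n) x) ((S ^^ n) y))"
        using c unfolding cle_def .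
      have p: "cpositive J star (d ((T ^^ n) x) ((S ^^ n) y))"
        by (rule met(2)[OF TX[OF that(1)] SX[OF that(2)]])
      show ?thesis using pos_mono[OF p c2] .
    qed
    also have "\<dots> \<le> norm ((star (q x y)) ^ n) * norm (\<delta> x y) * norm ((q x y) ^ n)"
    proof -
      have "norm ((star (q x y)) ^ n * \<delta> x y * (q x y) ^ n) \<le> norm ((star (q x y)) ^ n * \<delta> x y) * norm ((q x y) ^ n)"
        by (rule norm_mult_ineq)
      also have "\<dots> \<le> norm ((star (q x y)) ^ n) * norm (\<delta> x y) * norm ((q x y) ^ n)"
        by (intro mult_right_mono norm_mult_ineq norm_ge_zero)
      finally show ?thesis .
    qed
    also have "\<dots> \<le> norm (q x y) ^ n * norm (\<delta> x y) * norm (q x y) ^ n"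
    proof (intro mult_mono)
      show "norm (star (q x y) ^ n) \<le> norm (q x y) ^ n"
        using norm_power_ineq[of "star (q x y)" n] norm_star by simp
      show "norm (q x y ^ n) \<le> norm (q x y) ^ n" by (rule norm_power_ineq)
    qed auto
    also have "\<dots> = norm (\<delta> x y) * (norm (q x y) ^ 2) ^ n"
      by (simp add: power_mult[symmetric] mult.commute power2_eq_square power_mult_distrib)
    finally show ?thesis unfolding Dd_def .
  qed
  have lim0: "(\<lambda>n. Dd ((T ^^ n) x) ((S ^^ n) y)) \<longlonglongrightarrow> 0" if "x \<in> X" "y \<in> X" for x y
  proof (rule Lim_null_comparison)
    show "\<forall>\<^sub>F n in sequentially. norm (Dd ((T ^^ n) x) ((S ^^ n) y)) \<le> norm (\<delta> x y) * (norm (q x y) ^ 2) ^ n"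
      unfolding eventually_sequentially using bound[OF that] Dd_def by (intro exI[of _ 1]) auto
    have "norm (norm (q x y) ^ 2) < 1" using assms(6) that by (simp add: abs_square_less_1)
    then show "(\<lambda>n. norm (\<delta> x y) * (norm (q x y) ^ 2) ^ n) \<longlonglongrightarrow> 0"
      by (intro tendsto_mult_right_zero LIMSEQ_power_zero)
  qed
  show ?thesis
  proof
    assume oc: "orbitally_continuous X d T \<and> orbitally_continuous X d S"
    obtain x0 where x0: "x0 \<in> X" using met(1) by auto
    define s where "s n = (T ^^ n) x0" for n
    have sX: "s n \<in> X" for n using TX[OF x0] s_def by simp
    have cons: "Dd (s n) (s (Suc n)) \<le> norm (\<delta> x0 x0) * (norm (q x0 x0) ^ 2) ^ n
        + norm (\<delta> (T x0) x0) * (norm (q (T x0) x0) ^ 2) ^ n" if "n \<ge> 1" for n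
    proof -
      have Tx0: "T x0 \<in> X" using assms(4) x0 by simp
      have ss: "s (Suc n) = (T ^^ n) (T x0)" unfolding s_def funpow_Suc_right by simp
      have "Dd (s n) (s (Suc n)) \<le> Dd (s n) ((S ^^ n) x0) + Dd ((S ^^ n) x0) (s (Suc n))"
        by (rule tri[OF sX sX SX[OF x0]])
      also have "Dd ((S ^^ n) x0) (s (Suc n)) = Dd ((T ^^ n) (T x0)) ((S ^^ n) x0)"
        unfolding ss by (rule sym[OF SX[OF x0] TX[OF Tx0]])
      finally show ?thesis using bound[OF x0 x0 that] bound[OF Tx0 x0 that] unfolding s_def by linarith
    qed
    have sm: "summable (\<lambda>n. Dd (s n) (s (Suc n)))"
    proof (rule summable_comparison_test'[where N=1])
      have g1: "norm (norm (q x0 x0) ^ 2) < 1" using assms(6) x0 by (simp add: abs_square_less_1)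
      have g2: "norm (norm (q (T x0) x0) ^ 2) < 1" using assms(6) assms(4) x0 by (simp add: abs_square_less_1)
      show "summable (\<lambda>n. norm (\<delta> x0 x0) * (norm (q x0 x0) ^ 2) ^ n
        + norm (\<delta> (T x0) x0) * (norm (q (T x0) x0) ^ 2) ^ n)"
        by (intro summable_add summable_mult summable_geometric g1 g2)
      fix n :: nat assume "1 \<le> n"
      then show "norm (Dd (s n) (s (Suc n))) \<le> norm (\<delta> x0 x0) * (norm (q x0 x0) ^ 2) ^ n
        + norm (\<delta> (T x0) x0) * (norm (q (T x0) x0) ^ 2) ^ n"
        using cons Dd_def by simp
    qed
    have cauchy: "\<forall>e>0. \<exists>N. \<forall>n\<ge>N. \<forall>m\<ge>N. norm (d (s n) (s m)) < e"
      using cauchy_of_summable[OF tri refl sym sX sm] unfolding Dd_def .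
    have cc: "\<forall>s. (\<forall>n. s n \<in> X) \<longrightarrow>
        (\<forall>e>0. \<exists>N. \<forall>n\<ge>N. \<forall>m\<ge>N. norm (d (s n) (s m)) < e) \<longrightarrow>
        (\<exists>x\<in>X. (\<lambda>n. norm (d (s n) x)) \<longlonglongrightarrow> 0)"
      using assms(3) unfolding cstar_complete_def .
    have "\<exists>x\<in>X. (\<lambda>n. norm (d (s n) x)) \<longlonglongrightarrow> 0"
      using spec[OF cc, of s] sX cauchy by blast
    then obtain u where u: "u \<in> X" and su: "(\<lambda>n. norm (d (s n) u)) \<longlonglongrightarrow> 0" by blast
    have Tu: "T u \<in> X" "S u \<in> X" using assms(4,5) u by auto
    have su': "(\<lambda>n. Dd ((T ^^ n) x0) u) \<longlonglongrightarrow> 0" using su unfolding s_def Dd_def .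
    have ocT: "orbitally_continuous_at X d T u" using oc u unfolding orbitally_continuous_def by simp
    have smS: "strict_mono (Suc :: nat \<Rightarrow> nat) \<and> (\<forall>i. Suc i > 0)" by (simp add: strict_mono_Suc_iff)
    have "(\<lambda>i. norm (d ((T ^^ Suc i) x0) u)) \<longlonglongrightarrow> 0" using LIMSEQ_Suc[OF su'] Dd_def by simp
    then have "(\<lambda>i. norm (d ((T ^^ (Suc i + 1)) x0) (T u))) \<longlonglongrightarrow> 0"
      by (rule ocT[unfolded orbitally_continuous_at_def, rule_format, OF x0 smS])
    then have l1: "(\<lambda>i. Dd ((T ^^ Suc (Suc i)) x0) (T u)) \<longlonglongrightarrow> 0" unfolding Dd_def by simp
    have l2: "(\<lambda>i. Dd ((T ^^ Suc (Suc i)) x0) u) \<longlonglongrightarrow> 0" using LIMSEQ_Suc[OF LIMSEQ_Suc[OF su']] .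
    have fixT: "T u = u"
      by (rule lim_unique_D[OF tri sym zero _ Tu(1) u l1 l2]) (assumption | rule TX[OF x0])+
    have sS: "(\<lambda>n. Dd ((S ^^ n) x0) u) \<longlonglongrightarrow> 0"
    proof (rule Lim_null_comparison)
      show "(\<lambda>n. Dd ((T ^^ n) x0) ((S ^^ n) x0) + Dd ((T ^^ n) x0) u) \<longlonglongrightarrow> 0"
        using tendsto_add[OF lim0[OF x0 x0] su'] by simp
      show "\<forall>\<^sub>F n in sequentially. norm (Dd ((S ^^ n) x0) u) \<le> Dd ((T ^^ n) x0) ((S ^^ n) x0) + Dd ((T ^^ n) x0) u"
      proof (intro always_eventually allI)
        fix n
        have "Dd ((S ^^ n) x0) u \<le> Dd ((S ^^ n) x0) ((T ^^ n) x0) + Dd ((T ^^ n) x0) u"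
          by (rule tri[OF SX[OF x0] u TX[OF x0]])
        moreover have "Dd ((S ^^ n) x0) ((T ^^ n) x0) = Dd ((T ^^ n) x0) ((S ^^ n) x0)"
          by (rule sym[OF SX[OF x0] TX[OF x0]])
        ultimately show "norm (Dd ((S ^^ n) x0) u) \<le> Dd ((T ^^ n) x0) ((S ^^ n) x0) + Dd ((T ^^ n) x0) u"
          unfolding Dd_def by simp
      qed
    qed
    have ocS: "orbitally_continuous_at X d S u" using oc u unfolding orbitally_continuous_def by simp
    have smS: "strict_mono (Suc :: nat \<Rightarrow> nat) \<and> (\<forall>i. Suc i > 0)" by (simp add: strict_mono_Suc_iff)
    have "(\<lambda>i. norm (d ((S ^^ Suc i) x0) u)) \<longlonglongrightarrow> 0" using LIMSEQ_Suc[OF sS] Dd_def by simp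
    then have "(\<lambda>i. norm (d ((S ^^ (Suc i + 1)) x0) (S u))) \<longlonglongrightarrow> 0"
      by (rule ocS[unfolded orbitally_continuous_at_def, rule_format, OF x0 smS])
    then have l3: "(\<lambda>i. Dd ((S ^^ Suc (Suc i)) x0) (S u)) \<longlonglongrightarrow> 0" unfolding Dd_def by simp
    have l4: "(\<lambda>i. Dd ((S ^^ Suc (Suc i)) x0) u) \<longlonglongrightarrow> 0" using LIMSEQ_Suc[OF LIMSEQ_Suc[OF sS]] .
    have fixS: "S u = u"
      by (rule lim_unique_D[OF tri sym zero _ Tu(2) u l3 l4]) (assumption | rule SX[OF x0])+
    have uniq: "v = u" if "v \<in> X" "T v = v" "S v = v" for v
    proof -
      have "(\<lambda>n. Dd ((T ^^ n) v) ((S ^^ n) u)) \<longlonglongrightarrow> 0" by (rule lim0[OF that(1) u])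
      then have "(\<lambda>n. Dd v u) \<longlonglongrightarrow> 0" using funpow_fix[of T v] funpow_fix[of S u] that fixS by simp
      then have "Dd v u = 0" using LIMSEQ_const_iff by blast
      then show ?thesis using zero that(1) u by simp
    qed
    show "\<exists>!u. u \<in> X \<and> T u = u \<and> S u = u" using u fixT fixS uniq by blast
  next
    assume "\<exists>!u. u \<in> X \<and> T u = u \<and> S u = u"
    then obtain u where u: "u \<in> X" "T u = u" "S u = u" by blast
    have LT: "(\<lambda>n. Dd ((T ^^ n) x) u) \<longlonglongrightarrow> 0" if "x \<in> X" for x
      using lim0[OF that u(1)] funpow_fix[of S u] u(3) by simp
    have LS: "(\<lambda>n. Dd ((S ^^ n) x) u) \<longlonglongrightarrow> 0" if "x \<in> X" for x
    proof -
      have "(\<lambda>n. Dd ((T ^^ n) u) ((S ^^ n) x)) \<longlonglongrightarrow> 0" by (rule lim0[OF u(1) that])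
      moreover have "Dd ((T ^^ n) u) ((S ^^ n) x) = Dd ((S ^^ n) x) u" for n
        using funpow_fix[of T u] u sym SX[OF that] by simp
      ultimately show ?thesis by simp
    qed
    have gen: "orbitally_continuous X d F" if FX: "\<forall>x\<in>X. F x \<in> X" and Fu: "F u = u"
      and LF: "\<And>x. x \<in> X \<Longrightarrow> (\<lambda>n. Dd ((F ^^ n) x) u) \<longlonglongrightarrow> 0" for F
      unfolding orbitally_continuous_def orbitally_continuous_at_def
    proof (intro ballI allI impI)
      fix u' x and ns :: "nat \<Rightarrow> nat"
      assume u': "u' \<in> X" and x: "x \<in> X" and ns: "strict_mono ns \<and> (\<forall>i. 0 < ns i)"
        and lim: "(\<lambda>i. norm (d ((F ^^ ns i) x) u')) \<longlonglongrightarrow> 0"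
      have FnX: "(F ^^ n) x \<in> X" for n using funpow_in[OF FX x] .
      have sub: "(\<lambda>i. Dd ((F ^^ ns i) x) u) \<longlonglongrightarrow> 0"
        using LIMSEQ_subseq_LIMSEQ[OF LF[OF x], of ns] ns by (simp add: comp_def)
      have "u' = u"
        by (rule lim_unique_D[OF tri sym zero _ u' u(1) _ sub]) (use FnX lim Dd_def in auto)
      have sm1: "strict_mono (\<lambda>i. ns i + 1)" using ns by (simp add: strict_mono_def)
      have "(\<lambda>i. Dd ((F ^^ (ns i + 1)) x) u) \<longlonglongrightarrow> 0"
        using LIMSEQ_subseq_LIMSEQ[OF LF[OF x] sm1] by (simp add: comp_def)
      then show "(\<lambda>i. norm (d ((F ^^ (ns i + 1)) x) (F u'))) \<longlonglongrightarrow> 0"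
        using \<open>u' = u\<close> Fu Dd_def by simp
    qed
    show "orbitally_continuous X d T \<and> orbitally_continuous X d S"
      using gen[OF assms(4) u(2) LT] gen[OF assms(5) u(3) LS] by blast
  qed
qed



end
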